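(* In the setting of the Structural Lemma for SpDeques, let $T_\infty$ be an integer at least the depth of $\mathcal T$ and define $w(v) = T_\infty - d(v)$, where $d(v)$ is the depth of $v$ in $\mathcal T$. Then at every moment of the process, with $v_0$ the assigned node (if any) and $v_1,\ldots,v_k$ the deque nodes from bottom to top, \[ w(v_0) \leq w(v_1) < w(v_2) < \cdots < w(v_{k-1}) < w(v_k). \]
   Context: Setting: $\mathcal T$ is a rooted tree; a state consists of an optional assigned node $v_0$ and a deque $v_1,\ldots,v_k$ (bottom to top) of non-root nodes of $\mathcal T$; the state changes only by (a) assigning any non-root node when there is no assigned node and the deque is empty; (b) executing the assigned node $v_0$: with no children, $v_0$ is discarded and the bottom deque node (if any) is removed and becomes assigned; with one child $x$, $x$ becomes assigned; with two children $x,y$, $x$ is pushed to the bottom of the deque and $y$ becomes assigned; (c) removing the top deque node. The weight $w(v)$ corresponds to the paper's node weight $T_\infty - d(v)$ with $T_\infty$ the critical-path length. *)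

theory Defs
  imports Main
begin

definition tree_edges :: "'a set \<Rightarrow> ('a \<Rightarrow> 'a list) \<Rightarrow> ('a \<times> 'a) set" where
  "tree_edges V c = {(u, x). u \<in> V \<and> x \<in> set (c u)}"

definition rooted_tree :: "'a set \<Rightarrow> 'a \<Rightarrow> ('a \<Rightarrow> 'a list) \<Rightarrow> bool" where
  "rooted_tree V r c \<longleftrightarrow>
     finite V \<and> r \<in> V \<and>
     (\<forall>v\<in>V. set (c v) \<subseteq> V \<and> distinct (c v)) \<and>
     (\<forall>u\<in>V. r \<notin> set (c u)) \<and>
     (\<forall>v\<in>V. v \<noteq> r \<longrightarrow> (\<exists>!u. u \<in> V \<and> v \<in> set (c u))) \<and>
     (\<forall>v\<in>V. (r, v) \<in> (tree_edges V c)\<^sup>*)"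

definition depth :: "'a set \<Rightarrow> 'a \<Rightarrow> ('a \<Rightarrow> 'a list) \<Rightarrow> 'a \<Rightarrow> nat" where
  "depth V r c v = (LEAST n. (r, v) \<in> (tree_edges V c) ^^ n)"

definition tree_depth :: "'a set \<Rightarrow> 'a \<Rightarrow> ('a \<Rightarrow> 'a list) \<Rightarrow> nat" where
  "tree_depth V r c = Max (depth V r c ` V)"

text \<open>States: (assigned node option, deque listed from bottom to top).\<close>
type_synonym 'a spstate = "'a option \<times> 'a list"

inductive spstep :: "'a set \<Rightarrow> 'a \<Rightarrow> ('a \<Rightarrow> 'a list) \<Rightarrow> 'a spstate \<Rightarrow> 'a spstate \<Rightarrow> bool"
  for V r c where
  assign: "v \<in> V \<Longrightarrow> v \<noteq> r \<Longrightarrow> spstep V r c (None, []) (Some v, [])"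
| exec0_empty: "c v0 = [] \<Longrightarrow> spstep V r c (Some v0, []) (None, [])"
| exec0_pop: "c v0 = [] \<Longrightarrow> spstep V r c (Some v0, x # q) (Some x, q)"
| exec1: "c v0 = [x] \<Longrightarrow> spstep V r c (Some v0, q) (Some x, q)"
| exec2: "c v0 = [x, y] \<Longrightarrow> spstep V r c (Some v0, q) (Some y, x # q)"
| remove_top: "q \<noteq> [] \<Longrightarrow> spstep V r c (a, q) (a, butlast q)"

definition sp_reachable :: "'a set \<Rightarrow> 'a \<Rightarrow> ('a \<Rightarrow> 'a list) \<Rightarrow> 'a spstate \<Rightarrow> bool" where
  "sp_reachable V r c s \<longleftrightarrow> (spstep V r c)\<^sup>*\<^sup>* (None, []) s"

end

theory Submission
  imports Defs
begin

lemma depth_child: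
  assumes T: "rooted_tree V r c" and u: "u \<in> V" and x: "x \<in> set (c u)"
  shows "depth V r c x = depth V r c u + 1"
proof -
  let ?E = "tree_edges V c"
  have reach: "(r, u) \<in> ?E\<^sup>*" using T u unfolding rooted_tree_def by blast
  then obtain k where k: "(r, u) \<in> ?E ^^ k" using rtrancl_power by blast
  have du: "(r, u) \<in> ?E ^^ depth V r c u" unfolding depth_def using k by (rule LeastI)
  have ux: "(u, x) \<in> ?E" using u x unfolding tree_edges_def by auto
  have dx1: "(r, x) \<in> ?E ^^ (depth V r c u + 1)" using du ux by auto
  have xV: "x \<in> V" using T u x unfolding rooted_tree_def by blast
  have xr: "x \<noteq> r" using T u x unfolding rooted_tree_def by blast
  have uniq: "\<And>z. z \<in> V \<Longrightarrow> x \<in> set (c z) \<Longrightarrow> z = u"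
    using T xV xr u x unfolding rooted_tree_def by metis
  have le: "depth V r c x \<le> depth V r c u + 1"
    using dx1 unfolding depth_def[of V r c x] by (rule Least_le)
  have dx: "(r, x) \<in> ?E ^^ depth V r c x" unfolding depth_def[of V r c x] using dx1 by (rule LeastI)
  have "depth V r c x \<noteq> 0"
  proof
    assume "depth V r c x = 0"
    with dx have "(r, x) \<in> ?E ^^ 0" by simp
    with xr show False by simp
  qed
  then obtain m where m: "depth V r c x = Suc m" by (cases "depth V r c x") auto
  then have "(r, x) \<in> ?E ^^ m O ?E" using dx by simp
  then obtain z where z1: "(r, z) \<in> ?E ^^ m" and z2: "(z, x) \<in> ?E" by blast
  from z2 have "z = u" using uniq unfolding tree_edges_def by auto
  with z1 have "depth V r c u \<le> m" unfolding depth_def by (simp add: Least_le)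
  with m le show ?thesis by simp
qed

lemma child_V:
  assumes T: "rooted_tree V r c" and u: "u \<in> V" and x: "x \<in> set (c u)"
  shows "x \<in> V"
  using T u x unfolding rooted_tree_def by blast

lemma inv:
  assumes T: "rooted_tree V r c" and R: "(spstep V r c)\<^sup>*\<^sup>* (None, []) s"
  shows "(\<forall>v0. fst s = Some v0 \<longrightarrow> v0 \<in> V \<and> (snd s \<noteq> [] \<longrightarrow> depth V r c (hd (snd s)) \<le> depth V r c v0))
         \<and> set (snd s) \<subseteq> V \<and> sorted_wrt (\<lambda>x y. depth V r c y < depth V r c x) (snd s)"
  using R
proof (induction rule: rtranclp_induct)
  case base
  then show ?case by simp
next
  case (step s t)
  from step.hyps(2) step.IH show ?case
  proof cases
    case (assign v)
    then show ?thesis by simp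
  next
    case (exec0_empty v0)
    then show ?thesis by simp
  next
    case (exec0_pop v0 x q)
    have H: "x \<in> V" "set q \<subseteq> V" "sorted_wrt (\<lambda>x y. depth V r c y < depth V r c x) q"
      "\<forall>z\<in>set q. depth V r c z < depth V r c x"
      using step.IH exec0_pop by simp_all
    show ?thesis
    proof (cases q)
      case Nil then show ?thesis using exec0_pop H by simp
    next
      case (Cons b l) then show ?thesis using exec0_pop H by simp
    qed
  next
    case (exec1 v0 x q)
    then have v0V: "v0 \<in> V" using step.IH by simp
    have xV: "x \<in> V" using child_V[OF T v0V] exec1 by simp
    have "depth V r c x = depth V r c v0 + 1" using depth_child[OF T v0V] exec1 by simp
    then show ?thesis using exec1 step.IH xV by auto
  next
    case (exec2 v0 x y q)
    then have v0V: "v0 \<in> V" using step.IH by simp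
    have xV: "x \<in> V" "y \<in> V" using child_V[OF T v0V] exec2 by simp_all
    have dx: "depth V r c x = depth V r c v0 + 1" "depth V r c y = depth V r c v0 + 1"
      using depth_child[OF T v0V] exec2 by simp_all
    have "\<forall>z\<in>set q. depth V r c z < depth V r c x"
    proof
      fix z assume zq: "z \<in> set q"
      then obtain a l where q: "q = a # l" by (cases q) auto
      have "depth V r c a \<le> depth V r c v0" using step.IH exec2 q by auto
      moreover have "z = a \<or> depth V r c z < depth V r c a" using zq q step.IH exec2 by auto
      ultimately show "depth V r c z < depth V r c x" using dx by auto
    qed
    then show ?thesis using exec2 step.IH xV dx by auto
  next
    case (remove_top q a)
    have s1: "sorted_wrt (\<lambda>x y. depth V r c y < depth V r c x) (butlast q)"
    proof -
      have "sorted_wrt (\<lambda>x y. depth V r c y < depth V r c x) (butlast q @ [last q])"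
        using step.IH remove_top by simp
      then show ?thesis by (simp add: sorted_wrt_append)
    qed
    have s2: "set (butlast q) \<subseteq> set q" by (simp add: in_set_butlastD subsetI)
    have s3: "butlast q \<noteq> [] \<Longrightarrow> hd (butlast q) = hd q"
      using remove_top by (cases q) auto
    show ?thesis using step.IH remove_top s1 s2 s3 by auto
  qed
qed

theorem mainTheorem5:
  fixes V :: "'a set" and r :: 'a and c :: "'a \<Rightarrow> 'a list" and T_inf :: int
  assumes "rooted_tree V r c"
    and "T_inf \<ge> int (tree_depth V r c)"
    and "sp_reachable V r c (a, q)"
  defines "w \<equiv> \<lambda>v. T_inf - int (depth V r c v)"
  shows "(\<forall>v0. a = Some v0 \<longrightarrow> q \<noteq> [] \<longrightarrow> w v0 \<le> w (hd q))
         \<and> sorted_wrt (\<lambda>x y. w x < w y) q"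
proof -
  have I: "(\<forall>v0. a = Some v0 \<longrightarrow> v0 \<in> V \<and> (q \<noteq> [] \<longrightarrow> depth V r c (hd q) \<le> depth V r c v0))
         \<and> set q \<subseteq> V \<and> sorted_wrt (\<lambda>x y. depth V r c y < depth V r c x) q"
    using inv[OF assms(1)] assms(3) unfolding sp_reachable_def by fastforce
  have "sorted_wrt (\<lambda>x y. w x < w y) q"
  proof -
    have "sorted_wrt (\<lambda>x y. depth V r c y < depth V r c x) q" using I by blast
    then show ?thesis by (rule sorted_wrt_mono_rel[rotated]) (simp add: w_def)
  qed
  moreover have "\<forall>v0. a = Some v0 \<longrightarrow> q \<noteq> [] \<longrightarrow> w v0 \<le> w (hd q)"
    using I by (simp add: w_def)
  ultimately show ?thesis by blast
qed

end
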